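(* Let $n,p$ be positive integers, $X\in\mathbb{R}^{n\times p}$, $\mathbf y\in\mathbb{R}^n$ and $\delta>0$. For any $j\in\{1,\dots,p\}$, if the coordinates $t_i$, $i\neq j$, of $\mathbf t\in[0,1)^p$ are held fixed, then \[ \lim_{t_j\downarrow 0}\boldsymbol\zeta_{\mathbf t}(j)=0, \] where $\boldsymbol\zeta_{\mathbf t}(j)$ denotes the $j$-th component of $\boldsymbol\zeta_{\mathbf t}$.
   Context: For $\mathbf t\in[0,1)^p$, $T_{\mathbf t}=\mathrm{Diag}(t_1,\dots,t_p)$, $X_{\mathbf t}=XT_{\mathbf t}$, $L_{\mathbf t}=\frac1n[X_{\mathbf t}^\top X_{\mathbf t}+\delta(I-T_{\mathbf t}^2)]$ (invertible for such $\mathbf t$) with $I$ the $p\times p$ identity, $\widetilde{\boldsymbol\beta}_{\mathbf t}=L_{\mathbf t}^{-1}(X_{\mathbf t}^\top\mathbf y/n)$, and $\odot$ denotes the element-wise product. Define $\mathbf a_{\mathbf t}=\frac{X^\top X}{n}(\mathbf t\odot\widetilde{\boldsymbol\beta}_{\mathbf t})-\frac{X^\top\mathbf y}{n}$, $\mathbf b_{\mathbf t}=\mathbf a_{\mathbf t}-\frac{\delta}{n}(\mathbf t\odot\widetilde{\boldsymbol\beta}_{\mathbf t})$, $\mathbf c_{\mathbf t}=L_{\mathbf t}^{-1}(\mathbf t\odot\mathbf a_{\mathbf t})$, $\mathbf d_{\mathbf t}=\left(\frac{X^\top X}{n}-\frac{\delta}{n}I\right)(\mathbf t\odot\mathbf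 c_{\mathbf t})$, and $\boldsymbol\zeta_{\mathbf t}=2(\widetilde{\boldsymbol\beta}_{\mathbf t}\odot(\mathbf a_{\mathbf t}-\mathbf d_{\mathbf t}))-2(\mathbf b_{\mathbf t}\odot\mathbf c_{\mathbf t})$. *)

theory Defs
  imports "HOL-Analysis.Analysis"
begin

text \<open>Design matrix X is n x p (rows indexed by 'n, columns by 'p); n = CARD('n), p = CARD('p).\<close>

definition ewprod :: "real^'p \<Rightarrow> real^'p \<Rightarrow> real^'p" (infixl "\<odot>" 70) where
  "u \<odot> v = (\<chi> i. u$i * v$i)"

definition Tmat :: "real^'p \<Rightarrow> real^'p^'p" where
  "Tmat t = (\<chi> i k. if i = k then t$i else 0)"

definition Xt :: "real^'p^'n \<Rightarrow> real^'p \<Rightarrow> real^'p^'n" where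
  "Xt X t = X ** Tmat t"

definition Lmat :: "real^'p^'n \<Rightarrow> real \<Rightarrow> real^'p \<Rightarrow> real^'p^'p" where
  "Lmat X \<delta> t = (1 / real CARD('n)) *\<^sub>R
     (transpose (Xt X t) ** Xt X t + \<delta> *\<^sub>R (mat 1 - Tmat t ** Tmat t))"

definition beta_t :: "real^'p^'n \<Rightarrow> real^'n \<Rightarrow> real \<Rightarrow> real^'p \<Rightarrow> real^'p" where
  "beta_t X y \<delta> t = matrix_inv (Lmat X \<delta> t) *v
     ((1 / real CARD('n)) *\<^sub>R (transpose (Xt X t) *v y))"

definition a_t :: "real^'p^'n \<Rightarrow> real^'n \<Rightarrow> real \<Rightarrow> real^'p \<Rightarrow> real^'p" where
  "a_t X y \<delta> t = ((1 / real CARD('n)) *\<^sub>R (transpose X ** X)) *v (t \<odot> beta_t X y \<delta> t)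
     - (1 / real CARD('n)) *\<^sub>R (transpose X *v y)"

definition b_t :: "real^'p^'n \<Rightarrow> real^'n \<Rightarrow> real \<Rightarrow> real^'p \<Rightarrow> real^'p" where
  "b_t X y \<delta> t = a_t X y \<delta> t - (\<delta> / real CARD('n)) *\<^sub>R (t \<odot> beta_t X y \<delta> t)"

definition c_t :: "real^'p^'n \<Rightarrow> real^'n \<Rightarrow> real \<Rightarrow> real^'p \<Rightarrow> real^'p" where
  "c_t X y \<delta> t = matrix_inv (Lmat X \<delta> t) *v (t \<odot> a_t X y \<delta> t)"

definition d_t :: "real^'p^'n \<Rightarrow> real^'n \<Rightarrow> real \<Rightarrow> real^'p \<Rightarrow> real^'p" where
  "d_t X y \<delta> t = ((1 / real CARD('n)) *\<^sub>R (transpose X ** X) - (\<delta> / real CARD('n)) *\<^sub>R mat 1)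
     *v (t \<odot> c_t X y \<delta> t)"

definition zeta_t :: "real^'p^'n \<Rightarrow> real^'n \<Rightarrow> real \<Rightarrow> real^'p \<Rightarrow> real^'p" where
  "zeta_t X y \<delta> t = 2 *\<^sub>R (beta_t X y \<delta> t \<odot> (a_t X y \<delta> t - d_t X y \<delta> t))
     - 2 *\<^sub>R (b_t X y \<delta> t \<odot> c_t X y \<delta> t)"

end

theory Submission
  imports Defs
begin


lemma tendsto_mmult:
  fixes A :: "'a \<Rightarrow> real^'m^'n" and B :: "'a \<Rightarrow> real^'k^'m"
  assumes "(A \<longlongrightarrow> A0) F" "(B \<longlongrightarrow> B0) F"
  shows "((\<lambda>s. A s ** B s) \<longlongrightarrow> A0 ** B0) F"
  unfolding matrix_matrix_mult_def
  by (intro vec_tendstoI) (simp, intro tendsto_intros assms)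

lemma tendsto_mvmult:
  fixes A :: "'a \<Rightarrow> real^'m^'n" and B :: "'a \<Rightarrow> real^'m"
  assumes "(A \<longlongrightarrow> A0) F" "(B \<longlongrightarrow> B0) F"
  shows "((\<lambda>s. A s *v B s) \<longlongrightarrow> A0 *v B0) F"
  unfolding matrix_vector_mult_def
  by (intro vec_tendstoI) (simp, intro tendsto_intros assms)

lemma tendsto_transpose:
  fixes A :: "'a \<Rightarrow> real^'m^'n"
  assumes "(A \<longlongrightarrow> A0) F"
  shows "((\<lambda>s. transpose (A s)) \<longlongrightarrow> transpose A0) F"
  unfolding transpose_def
  by (intro vec_tendstoI) (simp, intro tendsto_intros assms)

lemma tendsto_ewprod:
  fixes A B :: "'a \<Rightarrow> real^'m"
  assumes "(A \<longlongrightarrow> A0) F" "(B \<longlongrightarrow> B0) F"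
  shows "((\<lambda>s. A s \<odot> B s) \<longlongrightarrow> A0 \<odot> B0) F"
  unfolding ewprod_def
  by (intro vec_tendstoI) (simp, intro tendsto_intros assms)

lemma tendsto_Tmat:
  fixes A :: "'a \<Rightarrow> real^'m"
  assumes "(A \<longlongrightarrow> A0) F"
  shows "((\<lambda>s. Tmat (A s)) \<longlongrightarrow> Tmat A0) F"
  unfolding Tmat_def
  apply (intro vec_tendstoI)
  apply simp
  using tendsto_vec_nth[OF assms] by auto

lemma tendsto_det:
  fixes A :: "'a \<Rightarrow> real^'m^'m"
  assumes "(A \<longlongrightarrow> A0) F"
  shows "((\<lambda>s. det (A s)) \<longlongrightarrow> det A0) F"
  unfolding det_def
  by (intro tendsto_intros assms)

lemma inv_right:
  fixes M :: "real^'m^'m"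
  assumes "det M \<noteq> 0"
  shows "M ** matrix_inv M = mat 1"
proof -
  have "invertible M" using assms invertible_det_nz by blast
  then show ?thesis unfolding invertible_def matrix_inv_def by (metis (mono_tags, lifting) someI_ex)
qed

lemma inv_cramer:
  fixes M :: "real^'m^'m"
  assumes "det M \<noteq> 0"
  shows "matrix_inv M *v b = (\<chi> k. det(\<chi> i j. if j=k then b$i else M$i$j) / det M)"
proof -
  have "M *v (matrix_inv M *v b) = b"
    by (simp add: matrix_vector_mul_assoc inv_right[OF assms])
  then show ?thesis using cramer[OF assms] by blast
qed

lemma tendsto_inv_mult:
  fixes M :: "'a \<Rightarrow> real^'m^'m" and b :: "'a \<Rightarrow> real^'m"
  assumes "(M \<longlongrightarrow> M0) F" "(b \<longlongrightarrow> b0) F" "det M0 \<noteq> 0"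
  shows "((\<lambda>s. matrix_inv (M s) *v b s) \<longlongrightarrow> matrix_inv M0 *v b0) F"
proof -
  have ev: "eventually (\<lambda>s. det (M s) \<noteq> 0) F"
    using tendsto_imp_eventually_ne[OF tendsto_det[OF assms(1)] assms(3)] .
  have "((\<lambda>s. (\<chi> k. det(\<chi> i j. if j=k then b s$i else M s$i$j) / det (M s))) \<longlongrightarrow>
     (\<chi> k. det(\<chi> i j. if j=k then b0$i else M0$i$j) / det M0)) F"
    apply (intro vec_tendstoI)
    apply simp
    apply (intro tendsto_intros tendsto_det assms vec_tendstoI)
    apply (auto intro!: tendsto_intros assms)
    done
  then have "((\<lambda>s. (\<chi> k. det(\<chi> i j. if j=k then b s$i else M s$i$j) / det (M s))) \<longlongrightarrow>
     matrix_inv M0 *v b0) F" using inv_cramer[OF assms(3)] by simp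
  then show ?thesis
    apply (rule tendsto_cong[THEN iffD1, rotated])
    using ev by (rule eventually_mono) (simp add: inv_cramer)
qed

lemma Tmat_mv: "Tmat t *v x = (\<chi> i. t$i * x$i)"
proof -
  have "\<And>i. (\<Sum>j\<in>UNIV. (if i = j then t$i else 0) * x$j) = t$i * x$i"
    by (simp add: if_distrib[of "\<lambda>z. z * _"] cong: if_cong)
  then show ?thesis by (simp add: vec_eq_iff matrix_vector_mult_def Tmat_def)
qed

lemma IminusTT:
  "(mat 1 - Tmat t ** Tmat t) *v x = (\<chi> i. (1 - (t$i)^2) * x$i)"
  by (simp add: matrix_vector_mult_diff_rdistrib matrix_vector_mul_assoc[symmetric] Tmat_mv
      vec_eq_iff algebra_simps power2_eq_square)

lemma inner_transp: "(x::real^'m) \<bullet> (transpose M *v w) = (M *v x) \<bullet> w"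
  by (metis dot_lmul_matrix inner_commute vector_transpose_matrix transpose_transpose)

lemma L_det:
  fixes X :: "real^'p^'n" and t :: "real^'p"
  assumes "\<delta> > 0" "\<forall>i. \<bar>t$i\<bar> < 1"
  shows "det (Lmat X \<delta> t) \<noteq> 0"
proof -
  let ?M = "Xt X t"
  have "\<forall>x. Lmat X \<delta> t *v x = 0 \<longrightarrow> x = 0"
  proof (intro allI impI)
    fix x :: "real^'p"
    assume h: "Lmat X \<delta> t *v x = 0"
    have Lx: "Lmat X \<delta> t *v x = (1 / real CARD('n)) *\<^sub>R (transpose ?M *v (?M *v x) + \<delta> *\<^sub>R (\<chi> i. (1 - (t$i)^2) * x$i))"
      unfolding Lmat_def
      by (simp add: scaleR_matrix_vector_assoc[symmetric] matrix_vector_mult_add_rdistrib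
          matrix_vector_mul_assoc[symmetric] IminusTT)
    have "0 = x \<bullet> (Lmat X \<delta> t *v x)" using h by simp
    also have "\<dots> = (1 / real CARD('n)) * ((?M *v x) \<bullet> (?M *v x) + \<delta> * (\<Sum>i\<in>UNIV. (1 - (t$i)^2) * (x$i)^2))"
      unfolding Lx inner_scaleR_right inner_add_right inner_transp
      by (simp add: inner_vec_def[of x] power2_eq_square algebra_simps sum_distrib_left del: vector_transpose_matrix)
    finally have e: "(?M *v x) \<bullet> (?M *v x) + \<delta> * (\<Sum>i\<in>UNIV. (1 - (t$i)^2) * (x$i)^2) = 0"
      by simp
    have nn: "\<And>i. 0 \<le> (1 - (t$i)^2) * (x$i)^2"
      using assms(2) by (metis abs_square_less_1 diff_ge_0_iff_ge less_eq_real_def zero_le_mult_iff zero_le_power2)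
    have "0 \<le> \<delta> * (\<Sum>i\<in>UNIV. (1 - (t$i)^2) * (x$i)^2)"
      using assms(1) nn by (simp add: sum_nonneg)
    then have "\<delta> * (\<Sum>i\<in>UNIV. (1 - (t$i)^2) * (x$i)^2) = 0"
      using e by (smt (verit) inner_ge_zero)
    then have "(\<Sum>i\<in>UNIV. (1 - (t$i)^2) * (x$i)^2) = 0" using assms(1) by simp
    then have "\<forall>i\<in>UNIV. (1 - (t$i)^2) * (x$i)^2 = 0"
      using nn by (simp add: sum_nonneg_eq_0_iff)
    moreover have "\<And>i. 1 - (t$i)^2 \<noteq> 0"
      using assms(2) by (metis abs_square_less_1 less_irrefl right_minus_eq)
    ultimately show "x = 0" by (simp add: vec_eq_iff)
  qed
  then obtain B where "B ** Lmat X \<delta> t = mat 1"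
    using matrix_left_invertible_ker by blast
  then have "invertible (Lmat X \<delta> t)" using invertible_left_inverse by blast
  then show ?thesis using invertible_det_nz by blast
qed

lemma zeta_cont:
  fixes X :: "real^'p^'n" and \<tau> :: "'a \<Rightarrow> real^'p"
  assumes tau: "(\<tau> \<longlongrightarrow> t0) F" and d: "det (Lmat X \<delta> t0) \<noteq> 0"
  shows "((\<lambda>s. zeta_t X y \<delta> (\<tau> s)) \<longlongrightarrow> zeta_t X y \<delta> t0) F"
proof -
  have XT: "((\<lambda>s. Xt X (\<tau> s)) \<longlongrightarrow> Xt X t0) F"
    unfolding Xt_def by (intro tendsto_mmult tendsto_Tmat tau tendsto_const)
  have L: "((\<lambda>s. Lmat X \<delta> (\<tau> s)) \<longlongrightarrow> Lmat X \<delta> t0) F"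
    unfolding Lmat_def
    by (intro tendsto_scaleR tendsto_add tendsto_diff tendsto_mmult tendsto_transpose XT tendsto_Tmat tau tendsto_const)
  have B: "((\<lambda>s. beta_t X y \<delta> (\<tau> s)) \<longlongrightarrow> beta_t X y \<delta> t0) F"
    unfolding beta_t_def
    by (intro tendsto_inv_mult L d tendsto_scaleR tendsto_mvmult tendsto_transpose XT tendsto_const)
  have A: "((\<lambda>s. a_t X y \<delta> (\<tau> s)) \<longlongrightarrow> a_t X y \<delta> t0) F"
    unfolding a_t_def
    by (intro tendsto_diff tendsto_mvmult tendsto_ewprod B tau tendsto_const)
  have Bb: "((\<lambda>s. b_t X y \<delta> (\<tau> s)) \<longlongrightarrow> b_t X y \<delta> t0) F"
    unfolding b_t_def
    by (intro tendsto_diff tendsto_scaleR tendsto_ewprod A B tau tendsto_const)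
  have C: "((\<lambda>s. c_t X y \<delta> (\<tau> s)) \<longlongrightarrow> c_t X y \<delta> t0) F"
    unfolding c_t_def
    by (intro tendsto_inv_mult L d tendsto_ewprod A tau)
  have D: "((\<lambda>s. d_t X y \<delta> (\<tau> s)) \<longlongrightarrow> d_t X y \<delta> t0) F"
    unfolding d_t_def
    by (intro tendsto_mvmult tendsto_ewprod C tau tendsto_const)
  show ?thesis
    unfolding zeta_t_def
    by (intro tendsto_diff tendsto_scaleR tendsto_ewprod tendsto_const A B Bb C D)
qed

lemma Xt_nth: "Xt X t $ i $ k = X$i$k * t$k"
proof -
  have "(\<Sum>m\<in>UNIV. X$i$m * (if m = k then t$m else 0)) = X$i$k * t$k"
    by (simp add: if_distrib[of "\<lambda>z. _ * z"] cong: if_cong)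
  then show ?thesis by (simp add: Xt_def matrix_matrix_mult_def Tmat_def)
qed

lemma L_row:
  fixes X :: "real^'p^'n"
  assumes "t$j = 0"
  shows "Lmat X \<delta> t $ j $ k = (\<delta> / real CARD('n)) * (if j = k then 1 else 0)"
proof -
  have "(transpose (Xt X t) ** Xt X t) $ j $ k = 0"
    by (simp add: matrix_matrix_mult_def transpose_def Xt_nth assms)
  moreover have "(Tmat t ** Tmat t) $ j $ k = 0"
    unfolding matrix_matrix_mult_def Tmat_def using assms by (auto intro!: sum.neutral)
  ultimately show ?thesis
    by (simp add: Lmat_def mat_def)
qed

lemma inv_row:
  fixes L :: "real^'m^'m"
  assumes "det L \<noteq> 0" "\<And>k. L $ j $ k = c * (if j = k then 1 else 0)" "c \<noteq> 0"
  shows "(matrix_inv L *v v) $ j = v $ j / c"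
proof -
  have "L *v (matrix_inv L *v v) = v"
    by (simp add: matrix_vector_mul_assoc inv_right[OF assms(1)])
  then have "(L *v (matrix_inv L *v v)) $ j = v $ j" by simp
  moreover have "(L *v (matrix_inv L *v v)) $ j = c * (matrix_inv L *v v) $ j"
    by (simp add: matrix_vector_mult_def assms(2) mult.assoc sum_distrib_left[symmetric]
        if_distrib[of "\<lambda>z. z * _"] cong: if_cong)
  ultimately show ?thesis using assms(3) by (simp add: field_simps)
qed

lemma zeta_zero:
  fixes X :: "real^'p^'n"
  assumes "t$j = 0" "\<delta> > 0" "det (Lmat X \<delta> t) \<noteq> 0"
  shows "zeta_t X y \<delta> t $ j = 0"
proof -
  have c0: "\<delta> / real CARD('n) \<noteq> 0" using assms(2) by simp
  have r: "\<And>k. Lmat X \<delta> t $ j $ k = (\<delta> / real CARD('n)) * (if j = k then 1 else 0)"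
    using L_row[OF assms(1)] .
  have "beta_t X y \<delta> t $ j = 0"
    unfolding beta_t_def
    by (subst inv_row[OF assms(3) r c0]) (simp add: matrix_vector_mult_def transpose_def Xt_nth assms(1))
  moreover have "c_t X y \<delta> t $ j = 0"
    unfolding c_t_def
    by (subst inv_row[OF assms(3) r c0]) (simp add: ewprod_def assms(1))
  ultimately show ?thesis
    by (simp add: zeta_t_def ewprod_def)
qed


theorem proposition1:
  fixes X :: "real^'p^'n" and y :: "real^'n" and \<delta> :: real
    and t :: "real^'p" and j :: 'p
  assumes "\<delta> > 0"
    and "\<forall>i. i \<noteq> j \<longrightarrow> 0 \<le> t$i \<and> t$i < 1"
  shows "((\<lambda>s. zeta_t X y \<delta> (\<chi> i. if i = j then s else t$i) $ j) \<longlongrightarrow> 0) (at_right 0)"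
proof -
  define t0 :: "real^'p" where "t0 = (\<chi> i. if i = j then 0 else t$i)"
  have tau: "((\<lambda>s. (\<chi> i. if i = j then s else t$i) :: real^'p) \<longlongrightarrow> t0) (at_right 0)"
    unfolding t0_def
    by (intro vec_tendstoI) (auto intro: tendsto_ident_at)
  have abs: "\<forall>i. \<bar>t0$i\<bar> < 1" using assms(2) by (auto simp: t0_def)
  have d: "det (Lmat X \<delta> t0) \<noteq> 0" using L_det[OF assms(1) abs] .
  have "((\<lambda>s. zeta_t X y \<delta> (\<chi> i. if i = j then s else t$i) $ j) \<longlongrightarrow> zeta_t X y \<delta> t0 $ j) (at_right 0)"
    by (intro tendsto_vec_nth zeta_cont[OF tau d])
  moreover have "zeta_t X y \<delta> t0 $ j = 0"
    by (rule zeta_zero[OF _ assms(1) d]) (simp add: t0_def)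
  ultimately show ?thesis by simp
qed

end
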